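(* Let $d>0$ be a constant, $k,b:\mathbb{R}_+\to\mathbb{R}_+$ measurable with $\int_0^{+\infty}k=+\infty$, $b\in L^\infty(\mathbb{R}_+)$, and $1<\int_0^{+\infty}b(a)e^{-\int_0^ak}da<+\infty$. Let $\eta_1,\eta_2,c_1,c_2,\tilde c_1,\tilde c_2\ge0$ with $\eta_1>0$, and $c_1^{tot}=\eta_1+c_1$, $c_2^{tot}=\eta_2+c_2$. Let $(N_1^*,N_2^* )$ be the population sizes ($N_1^*=\int n_1^*$) of the unique non-trivial nonnegative steady state of system (S): $$\partial_tn_1+\partial_an_1=-\big(k(a)+c_1^{tot}N_1+c_2^{tot}N_2\big)n_1,\quad n_1(t,0)=\int_0^{+\infty}bn_1da,$$ $$\frac{dN_2}{dt}=-(d+\tilde c_1N_1+\tilde c_2N_2)N_2+\int_0^{+\infty}(k(a)+\eta_1N_1+\eta_2N_2)n_1da,$$ and let $(N_1^{**},N_2^{**})$ be those of the unique non-trivial nonnegative steady state of system (S'), obtained from (S) by keeping the same phase-1 competition $c_1^{tot}N_1+c_2^{tot}N_2$ but removing competition-driven transition, i.e. with the last equation replaced by $$\frac{dN_2}{dt}=-(d+\tilde c_1N_1+\tilde c_2N_2)N_2+\int_0^{+\infty}k(a)n_1da,$$ where in both systems $N_1=\int_0^{+\infty}n_1da$. Then $N_1^{**}\ge N_1^*$ and $N_2^{**}\le N_2^*$. Furthermore, $c_2^{tot}\le c_1^{tot}$ if and only if $N_1^{**}+N_2^{**}\le N_1^*+N_2^*$. *)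

theory Defs
  imports "HOL-Analysis.Analysis"
begin

definition cumk :: "(real \<Rightarrow> real) \<Rightarrow> real \<Rightarrow> ennreal" where
  "cumk k a = (\<integral>\<^sup>+ x\<in>{0..a}. ennreal (k x) \<partial>lborel)"

definition surv :: "(real \<Rightarrow> real) \<Rightarrow> real \<Rightarrow> real" where
  "surv k a = (if cumk k a = \<infinity> then 0 else exp (- enn2real (cumk k a)))"

definition popsize :: "(real \<Rightarrow> real) \<Rightarrow> real" where
  "popsize n = (LINT a:{0..}|lborel. n a)"

text \<open>Nonnegative steady state (n1, N2) of system (S) (with_trans = True) or (S') (with_trans = False).
  The age-structured equation is taken in its (mild) integrated form along characteristics:
  n1(a) = n1(0) exp(-int_0^a k - C a), with n1(0) = int b n1 and C = c1tot N1 + c2tot N2.\<close>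
definition steady_state ::
  "(real \<Rightarrow> real) \<Rightarrow> (real \<Rightarrow> real) \<Rightarrow> real \<Rightarrow> real \<Rightarrow> real \<Rightarrow> real \<Rightarrow> real \<Rightarrow> real \<Rightarrow> real
   \<Rightarrow> bool \<Rightarrow> (real \<Rightarrow> real) \<Rightarrow> real \<Rightarrow> bool" where
  "steady_state k b d eta1 eta2 c1 c2 ct1 ct2 with_trans n1 N2 \<longleftrightarrow>
     (\<forall>a\<ge>0. n1 a \<ge> 0) \<and> N2 \<ge> 0 \<and> set_integrable lborel {0..} n1 \<and>
     (let N1 = popsize n1;
          C = (eta1 + c1) * N1 + (eta2 + c2) * N2;
          B = (\<integral>\<^sup>+ a\<in>{0..}. ennreal (b a * n1 a) \<partial>lborel)
      in B < \<infinity> \<and>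
         (\<forall>a\<ge>0. n1 a = enn2real B * surv k a * exp (- C * a)) \<and>
         ennreal ((d + ct1 * N1 + ct2 * N2) * N2) =
           (\<integral>\<^sup>+ a\<in>{0..}. ennreal ((k a + (if with_trans then eta1 * N1 + eta2 * N2 else 0)) * n1 a) \<partial>lborel))"

definition nontrivial :: "(real \<Rightarrow> real) \<Rightarrow> real \<Rightarrow> bool" where
  "nontrivial n1 N2 \<longleftrightarrow> (\<exists>a\<ge>0. n1 a \<noteq> 0) \<or> N2 \<noteq> 0"

end

theory Submission
  imports Defs
begin


lemma cumk_mono: "a \<le> a' \<Longrightarrow> cumk k a \<le> cumk k a'"
  unfolding cumk_def
  by (intro nn_integral_mono) (auto split: split_indicator)

lemma surv_nonneg: "surv k a \<ge> 0"
  by (simp add: surv_def)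

lemma surv_antimono: "a \<le> a' \<Longrightarrow> surv k a' \<le> surv k a"
proof -
  assume "a \<le> a'"
  then have le: "cumk k a \<le> cumk k a'" by (rule cumk_mono)
  show ?thesis
  proof (cases "cumk k a' = \<infinity>")
    case True then show ?thesis by (simp add: surv_def)
  next
    case False
    then have F: "cumk k a \<noteq> \<infinity>" using le by (auto simp: top_unique)
    have "enn2real (cumk k a) \<le> enn2real (cumk k a')"
      using le False by (simp add: enn2real_mono top.not_eq_extremum)
    then show ?thesis using False F by (simp add: surv_def)
  qed
qed

lemma surv_meas: "surv k \<in> borel_measurable borel"
proof -
  have "mono (\<lambda>a. - surv k a)" by (auto simp: mono_def intro: surv_antimono)
  then have "(\<lambda>a. - surv k a) \<in> borel_measurable borel" by (rule borel_measurable_mono)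
  then have "(\<lambda>a. - (- surv k a)) \<in> borel_measurable borel" by measurable
  then show ?thesis by simp
qed

lemma ind_meas:
  fixes h :: "real \<Rightarrow> real"
  assumes "set_borel_measurable lborel {0..} h"
  shows "(\<lambda>a. ennreal (h a) * indicator {0..} a) \<in> borel_measurable lborel"
proof -
  have "(\<lambda>a. ennreal (indicator {0..} a *\<^sub>R h a)) \<in> borel_measurable lborel"
    using assms unfolding set_borel_measurable_def by measurable
  moreover have "(\<lambda>a. ennreal (indicator {0..} a *\<^sub>R h a)) = (\<lambda>a. ennreal (h a) * indicator {0..} a)"
    by (auto split: split_indicator)
  ultimately show ?thesis by simp
qed

lemma set_meas_mult:
  fixes f g :: "real \<Rightarrow> real"
  assumes "set_borel_measurable lborel {0..} f" "set_borel_measurable lborel {0..} g"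
  shows "set_borel_measurable lborel {0..} (\<lambda>a. f a * g a)"
proof -
  have "(\<lambda>a. (indicator {0..} a *\<^sub>R f a) * (indicator {0..} a *\<^sub>R g a)) \<in> borel_measurable lborel"
    using borel_measurable_times[OF assms[unfolded set_borel_measurable_def]] by simp
  moreover have "(\<lambda>a. (indicator {0..} a *\<^sub>R f a) * (indicator {0..} a *\<^sub>R g a)) = (\<lambda>a. indicator {0..} a *\<^sub>R (f a * g a))"
    by (auto split: split_indicator)
  ultimately show ?thesis unfolding set_borel_measurable_def by simp
qed

lemma set_meas_glob:
  fixes g :: "real \<Rightarrow> real"
  assumes "g \<in> borel_measurable borel"
  shows "set_borel_measurable lborel {0..} g"
  unfolding set_borel_measurable_def using assms by simp

lemma F_lt_false:
  fixes b k :: "real \<Rightarrow> real"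
  assumes b_meas: "set_borel_measurable lborel {0..} b" and b_nonneg: "\<forall>a\<ge>0. b a \<ge> 0"
    and R0_gt: "1 < (\<integral>\<^sup>+ a\<in>{0..}. ennreal (b a * surv k a) \<partial>lborel)"
    and F1: "(\<integral>\<^sup>+ a\<in>{0..}. ennreal (b a * surv k a * exp (- C1 * a)) \<partial>lborel) = 1"
    and F2: "(\<integral>\<^sup>+ a\<in>{0..}. ennreal (b a * surv k a * exp (- C2 * a)) \<partial>lborel) = 1"
    and lt: "C1 < C2"
  shows False
proof -
  define g where "g a = b a * surv k a" for a
  have gm: "set_borel_measurable lborel {0..} g"
    unfolding g_def by (intro set_meas_mult b_meas set_meas_glob surv_meas)
  have gn: "g a \<ge> 0" if "a \<ge> 0" for a
    using b_nonneg that surv_nonneg[of k a] by (simp add: g_def)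
  have ele: "exp (- C2 * a) \<le> exp (- C1 * a)" if "a \<ge> 0" for a
    using lt that by (simp add: mult_right_mono)
  have elt: "exp (- C2 * a) < exp (- C1 * a)" if "a > 0" for a
    using lt that by (simp add: mult_strict_right_mono)
  have m1: "set_borel_measurable lborel {0..} (\<lambda>a. g a * exp (- C2 * a))"
    by (intro set_meas_mult gm set_meas_glob) simp
  have m2: "set_borel_measurable lborel {0..} (\<lambda>a. g a * (exp (- C1 * a) - exp (- C2 * a)))"
    by (intro set_meas_mult gm set_meas_glob) simp
  have "(\<integral>\<^sup>+ a\<in>{0..}. ennreal (b a * surv k a * exp (- C1 * a)) \<partial>lborel)
      = (\<integral>\<^sup>+ a. ennreal (g a * exp (- C2 * a)) * indicator {0..} a
           + ennreal (g a * (exp (- C1 * a) - exp (- C2 * a))) * indicator {0..} a \<partial>lborel)"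
  proof (intro nn_integral_cong)
    fix a :: real
    show "ennreal (b a * surv k a * exp (- C1 * a)) * indicator {0..} a =
      ennreal (g a * exp (- C2 * a)) * indicator {0..} a
           + ennreal (g a * (exp (- C1 * a) - exp (- C2 * a))) * indicator {0..} a"
    proof (cases "a \<ge> 0")
      case True
      have "ennreal (b a * surv k a * exp (- C1 * a)) = ennreal (g a * exp (- C2 * a) + g a * (exp (- C1 * a) - exp (- C2 * a)))"
        by (simp add: g_def algebra_simps)
      also have "\<dots> = ennreal (g a * exp (- C2 * a)) + ennreal (g a * (exp (- C1 * a) - exp (- C2 * a)))"
        using gn[OF True] ele[OF True] by (intro ennreal_plus) auto
      finally show ?thesis using True by simp
    qed simp
  qed
  also have "\<dots> = (\<integral>\<^sup>+ a\<in>{0..}. ennreal (g a * exp (- C2 * a)) \<partial>lborel)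
      + (\<integral>\<^sup>+ a\<in>{0..}. ennreal (g a * (exp (- C1 * a) - exp (- C2 * a))) \<partial>lborel)"
    by (intro nn_integral_add ind_meas m1 m2)
  finally have "(\<integral>\<^sup>+ a\<in>{0..}. ennreal (b a * surv k a * exp (- C1 * a)) \<partial>lborel) = (\<integral>\<^sup>+ a\<in>{0..}. ennreal (g a * exp (- C2 * a)) \<partial>lborel) + (\<integral>\<^sup>+ a\<in>{0..}. ennreal (g a * (exp (- C1 * a) - exp (- C2 * a))) \<partial>lborel)"
    .
  moreover have "(\<integral>\<^sup>+ a\<in>{0..}. ennreal (g a * exp (- C2 * a)) \<partial>lborel) = 1"
    using F2 unfolding g_def by simp
  ultimately have "1 = 1 + (\<integral>\<^sup>+ a\<in>{0..}. ennreal (g a * (exp (- C1 * a) - exp (- C2 * a))) \<partial>lborel)"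
    using F1 by simp
  then have "(\<integral>\<^sup>+ a\<in>{0..}. ennreal (g a * (exp (- C1 * a) - exp (- C2 * a))) \<partial>lborel) = 0"
  proof -
    have *: "1 + X = 1 + 0 \<Longrightarrow> X = 0" for X :: ennreal
      using ennreal_add_left_cancel[of 1 X 0] by simp
    show ?thesis by (rule *) (use \<open>1 = _\<close> in simp)
  qed
  then have "AE a in lborel. ennreal (g a * (exp (- C1 * a) - exp (- C2 * a))) * indicator {0..} a = 0"
    using nn_integral_0_iff_AE[OF ind_meas[OF m2]] by simp
  then have "AE a in lborel. ennreal (b a * surv k a) * indicator {0..} a = 0"
    using AE_lborel_singleton[of "0::real"]
  proof eventually_elim
    case (elim a)
    show ?case
    proof (cases "a > 0")
      case True
      then have "g a * (exp (- C1 * a) - exp (- C2 * a)) \<le> 0" using elim by (simp add: ennreal_eq_0_iff)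
      then have "g a \<le> 0" using elt[OF True] by (simp add: mult_le_0_iff)
      then show ?thesis by (simp add: g_def ennreal_eq_0_iff)
    next
      case False
      then show ?thesis using elim by simp
    qed
  qed
  then have "(\<integral>\<^sup>+ a\<in>{0..}. ennreal (b a * surv k a) \<partial>lborel) = 0"
    using nn_integral_cong_AE[of "\<lambda>a. ennreal (b a * surv k a) * indicator {0..} a" "\<lambda>_. 0" lborel] by simp
  then show False using R0_gt by simp
qed


lemma ss_props:
  fixes k b n1 :: "real \<Rightarrow> real" and d eta1 eta2 c1 c2 ct1 ct2 N2 :: real
  assumes d_pos: "d > 0"
    and k_meas: "set_borel_measurable lborel {0..} k" and k_nonneg: "\<forall>a\<ge>0. k a \<ge> 0"
    and b_meas: "set_borel_measurable lborel {0..} b" and b_nonneg: "\<forall>a\<ge>0. b a \<ge> 0"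
    and pars: "eta1 \<ge> 0" "eta2 \<ge> 0" "c1 \<ge> 0" "c2 \<ge> 0" "ct1 \<ge> 0" "ct2 \<ge> 0"
    and S: "steady_state k b d eta1 eta2 c1 c2 ct1 ct2 wt n1 N2" "nontrivial n1 N2"
  shows "\<exists>\<beta> K. \<beta> > 0 \<and> K \<ge> 0 \<and> popsize n1 > 0 \<and> N2 \<ge> 0 \<and> (\<forall>a\<ge>0. n1 a \<ge> 0) \<and>
     set_borel_measurable lborel {0..} n1 \<and>
     (\<forall>a\<ge>0. n1 a = \<beta> * surv k a * exp (- ((eta1 + c1) * popsize n1 + (eta2 + c2) * N2) * a)) \<and>
     (\<integral>\<^sup>+ a\<in>{0..}. ennreal (b a * surv k a * exp (- ((eta1 + c1) * popsize n1 + (eta2 + c2) * N2) * a)) \<partial>lborel) = 1 \<and>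
     (\<integral>\<^sup>+ a\<in>{0..}. ennreal (k a * n1 a) \<partial>lborel) = ennreal K \<and>
     (d + ct1 * popsize n1 + ct2 * N2) * N2 = K + (if wt then (eta1 * popsize n1 + eta2 * N2) * popsize n1 else 0)"
proof -
  define N1 where "N1 = popsize n1"
  define C where "C = (eta1 + c1) * N1 + (eta2 + c2) * N2"
  define B where "B = (\<integral>\<^sup>+ a\<in>{0..}. ennreal (b a * n1 a) \<partial>lborel)"
  define e where "e = (if wt then eta1 * N1 + eta2 * N2 else 0)"
  have nn: "\<forall>a\<ge>0. n1 a \<ge> 0" and N2nn: "N2 \<ge> 0" and integ: "set_integrable lborel {0..} n1"
    and Bfin: "B < \<infinity>" and form: "\<forall>a\<ge>0. n1 a = enn2real B * surv k a * exp (- C * a)"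
    and eqn: "ennreal ((d + ct1 * N1 + ct2 * N2) * N2) =
           (\<integral>\<^sup>+ a\<in>{0..}. ennreal ((k a + e) * n1 a) \<partial>lborel)"
    using S(1) unfolding steady_state_def Let_def N1_def[symmetric] C_def[symmetric] B_def[symmetric] e_def
    by (auto simp: if_distrib)
  have n1m: "set_borel_measurable lborel {0..} n1"
    using integ unfolding set_integrable_def set_borel_measurable_def by (rule borel_measurable_integrable)
  have nnN1: "(\<integral>\<^sup>+ a\<in>{0..}. ennreal (n1 a) \<partial>lborel) = ennreal N1"
  proof -
    have "(\<integral>\<^sup>+ a. ennreal (indicator {0..} a *\<^sub>R n1 a) \<partial>lborel) = ennreal (integral\<^sup>L lborel (\<lambda>a. indicator {0..} a *\<^sub>R n1 a))"
      by (rule nn_integral_eq_integral) (use integ nn in \<open>auto simp: set_integrable_def split: split_indicator\<close>)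
    moreover have "(\<integral>\<^sup>+ a. ennreal (indicator {0..} a *\<^sub>R n1 a) \<partial>lborel) = (\<integral>\<^sup>+ a\<in>{0..}. ennreal (n1 a) \<partial>lborel)"
      by (intro nn_integral_cong) (auto split: split_indicator)
    ultimately show ?thesis by (simp add: N1_def popsize_def set_lebesgue_integral_def)
  qed
  have N1nn: "N1 \<ge> 0"
    unfolding N1_def popsize_def set_lebesgue_integral_def using nn
    by (intro Bochner_Integration.integral_nonneg) (auto split: split_indicator)
  have N1pos: "N1 > 0"
  proof (rule ccontr)
    assume "\<not> N1 > 0"
    then have N10: "N1 = 0" using N1nn by simp
    then have "AE a in lborel. ennreal (n1 a) * indicator {0..} a = 0"
      using nn_integral_0_iff_AE[OF ind_meas[OF n1m]] nnN1 by simp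
    then have "AE a in lborel. ennreal (b a * n1 a) * indicator {0..} a = 0"
    proof eventually_elim
      case (elim a)
      show ?case
      proof (cases "a \<ge> 0")
        case True
        then have "ennreal (n1 a) = 0" using elim by simp
        then have "n1 a \<le> 0" by (simp add: ennreal_eq_0_iff)
        then have "n1 a = 0" using nn True by force
        then show ?thesis by simp
      qed simp
    qed
    then have "B = 0" unfolding B_def
      using nn_integral_cong_AE[of "\<lambda>a. ennreal (b a * n1 a) * indicator {0..} a" "\<lambda>_. 0" lborel] by simp
    then have n0: "\<forall>a\<ge>0. n1 a = 0" using form by simp
    have "(\<integral>\<^sup>+ a\<in>{0..}. ennreal ((k a + e) * n1 a) \<partial>lborel) = (\<integral>\<^sup>+ (a::real). 0 \<partial>lborel)"
      by (intro nn_integral_cong) (auto split: split_indicator simp: n0)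
    then have "ennreal ((d + ct2 * N2) * N2) = 0" using eqn N10 by simp
    then have "(d + ct2 * N2) * N2 \<le> 0" by (simp add: ennreal_eq_0_iff)
    moreover have "N2 > 0 \<Longrightarrow> (d + ct2 * N2) * N2 > 0"
      using d_pos pars N2nn by (intro mult_pos_pos add_pos_nonneg) auto
    ultimately have "N2 = 0" using N2nn by linarith
    then show False using S(2) n0 unfolding nontrivial_def by auto
  qed
  define \<beta> where "\<beta> = enn2real B"
  have Bb: "B = ennreal \<beta>" unfolding \<beta>_def using Bfin by simp
  have bpos: "\<beta> > 0"
  proof (rule ccontr)
    assume "\<not> \<beta> > 0"
    then have "\<beta> = 0" unfolding \<beta>_def by (simp add: enn2real_nonneg antisym)
    then have n0: "\<forall>a\<ge>0. n1 a = 0" using form unfolding \<beta>_def by simp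
    have "(\<integral>\<^sup>+ a\<in>{0..}. ennreal (n1 a) \<partial>lborel) = (\<integral>\<^sup>+ (a::real). 0 \<partial>lborel)"
      by (intro nn_integral_cong) (auto split: split_indicator simp: n0)
    then have "ennreal N1 = 0" using nnN1 by simp
    then show False using N1pos by simp
  qed
  have Fm: "set_borel_measurable lborel {0..} (\<lambda>a. b a * surv k a * exp (- C * a))"
    by (intro set_meas_mult b_meas set_meas_glob surv_meas) simp
  have "ennreal \<beta> * 1 = B" using Bb by simp
  also have "B = (\<integral>\<^sup>+ a. ennreal \<beta> * (ennreal (b a * surv k a * exp (- C * a)) * indicator {0..} a) \<partial>lborel)"
    unfolding B_def
  proof (intro nn_integral_cong)
    fix a :: real
    show "ennreal (b a * n1 a) * indicator {0..} a = ennreal \<beta> * (ennreal (b a * surv k a * exp (- C * a)) * indicator {0..} a)"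
    proof (cases "a \<ge> 0")
      case True
      have eq: "b a * n1 a = \<beta> * (b a * surv k a * exp (- C * a))" using form True unfolding \<beta>_def by simp
      have X0: "b a * surv k a * exp (- C * a) \<ge> 0" using b_nonneg True surv_nonneg[of k a] by simp
      have "ennreal (b a * n1 a) = ennreal \<beta> * ennreal (b a * surv k a * exp (- C * a))"
        unfolding eq by (rule ennreal_mult) (use bpos X0 in auto)
      then show ?thesis using True by simp
    qed simp
  qed
  also have "\<dots> = ennreal \<beta> * (\<integral>\<^sup>+ a\<in>{0..}. ennreal (b a * surv k a * exp (- C * a)) \<partial>lborel)"
    by (intro nn_integral_cmult ind_meas Fm)
  finally have F1: "(\<integral>\<^sup>+ a\<in>{0..}. ennreal (b a * surv k a * exp (- C * a)) \<partial>lborel) = 1"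
    using bpos by (subst (asm) ennreal_mult_cancel_left) auto
  have Km: "set_borel_measurable lborel {0..} (\<lambda>a. k a * n1 a)"
    by (intro set_meas_mult k_meas n1m)
  have Em: "set_borel_measurable lborel {0..} (\<lambda>a. e * n1 a)"
    by (intro set_meas_mult n1m set_meas_glob) simp
  have enn: "e \<ge> 0" unfolding e_def using pars N1nn N2nn by simp
  have "(\<integral>\<^sup>+ a\<in>{0..}. ennreal ((k a + e) * n1 a) \<partial>lborel)
     = (\<integral>\<^sup>+ a. ennreal (k a * n1 a) * indicator {0..} a + ennreal (e * n1 a) * indicator {0..} a \<partial>lborel)"
  proof (intro nn_integral_cong)
    fix a :: real
    show "ennreal ((k a + e) * n1 a) * indicator {0..} a = ennreal (k a * n1 a) * indicator {0..} a + ennreal (e * n1 a) * indicator {0..} a"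
    proof (cases "a \<ge> 0")
      case True
      have "ennreal ((k a + e) * n1 a) = ennreal (k a * n1 a + e * n1 a)" by (simp add: algebra_simps)
      also have "\<dots> = ennreal (k a * n1 a) + ennreal (e * n1 a)"
        using True k_nonneg nn enn by (intro ennreal_plus) auto
      finally show ?thesis using True by simp
    qed simp
  qed
  also have "\<dots> = (\<integral>\<^sup>+ a\<in>{0..}. ennreal (k a * n1 a) \<partial>lborel) + (\<integral>\<^sup>+ a\<in>{0..}. ennreal (e * n1 a) \<partial>lborel)"
    by (intro nn_integral_add ind_meas Km Em)
  also have "(\<integral>\<^sup>+ a\<in>{0..}. ennreal (e * n1 a) \<partial>lborel) = (\<integral>\<^sup>+ a. ennreal e * (ennreal (n1 a) * indicator {0..} a) \<partial>lborel)"
    by (intro nn_integral_cong) (use enn nn in \<open>auto split: split_indicator intro!: ennreal_mult\<close>)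
  also have "\<dots> = ennreal e * ennreal N1"
    using nn_integral_cmult[OF ind_meas[OF n1m], of "ennreal e"] nnN1 by simp
  finally have eq2: "ennreal ((d + ct1 * N1 + ct2 * N2) * N2) = (\<integral>\<^sup>+ a\<in>{0..}. ennreal (k a * n1 a) \<partial>lborel) + ennreal (e * N1)"
    using eqn enn N1nn by (simp add: ennreal_mult)
  define Kint where "Kint = (\<integral>\<^sup>+ a\<in>{0..}. ennreal (k a * n1 a) \<partial>lborel)"
  have "Kint \<noteq> \<infinity>"
  proof
    assume "Kint = \<infinity>"
    then show False using eq2 unfolding Kint_def[symmetric] by simp
  qed
  define K where "K = enn2real Kint"
  have KK: "Kint = ennreal K" "K \<ge> 0"
    using \<open>Kint \<noteq> \<infinity>\<close> unfolding K_def by (auto simp: less_top)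
  have "ennreal ((d + ct1 * N1 + ct2 * N2) * N2) = ennreal (K + e * N1)"
    using eq2 KK enn N1nn unfolding Kint_def[symmetric] by (simp add: ennreal_plus)
  then have eq3: "(d + ct1 * N1 + ct2 * N2) * N2 = K + e * N1"
    using KK enn N1nn N2nn pars d_pos by (subst (asm) ennreal_inj) auto
  show ?thesis
    apply (rule exI[of _ \<beta>], rule exI[of _ K])
    using bpos KK N1pos N2nn nn n1m form F1 eq3
    unfolding N1_def[symmetric] C_def[symmetric] \<beta>_def[symmetric] Kint_def[symmetric] e_def
    by (auto simp: if_distrib)
qed

lemma alg:
  fixes d eta1 eta2 c1 c2 ct1 ct2 N1 N2 M1 M2 l Ks :: real
  assumes "d > 0" "eta1 > 0" "eta2 \<ge> 0" "c1 \<ge> 0" "c2 \<ge> 0" "ct1 \<ge> 0" "ct2 \<ge> 0"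
    and "N1 > 0" "l > 0" "N2 \<ge> 0" "M2 \<ge> 0" "Ks \<ge> 0"
    and A: "(d + ct1 * N1 + ct2 * N2) * N2 = Ks + (eta1 * N1 + eta2 * N2) * N1"
    and B: "(d + ct1 * M1 + ct2 * M2) * M2 = l * Ks"
    and M1: "M1 = l * N1"
    and Ceq: "(eta1 + c1) * N1 + (eta2 + c2) * N2 = (eta1 + c1) * M1 + (eta2 + c2) * M2"
  shows "M1 \<ge> N1 \<and> M2 \<le> N2 \<and> (eta2 + c2 \<le> eta1 + c1 \<longleftrightarrow> M1 + M2 \<le> N1 + N2)"
proof -
  have c1p: "eta1 + c1 > 0" using assms by simp
  have lin: "(eta1 + c1) * (M1 - N1) = (eta2 + c2) * (N2 - M2)" using Ceq by (simp add: algebra_simps)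
  have KsA: "Ks \<le> (d + ct1 * N1 + ct2 * N2) * N2"
    using A assms by (simp add: add_nonneg_nonneg mult_nonneg_nonneg)
  have M2le: "M2 \<le> N2"
  proof (rule ccontr)
    assume "\<not> M2 \<le> N2"
    then have lt: "N2 < M2" by simp
    have "(eta1 + c1) * (M1 - N1) \<le> 0" using lin lt assms by (simp add: mult_nonneg_nonpos)
    then have "M1 \<le> N1" using c1p by (simp add: mult_le_0_iff)
    then have l1: "l \<le> 1" using M1 \<open>N1 > 0\<close> by simp
    have "l * Ks \<le> l * ((d + ct1 * N1 + ct2 * N2) * N2)" using KsA \<open>l > 0\<close> by simp
    also have "\<dots> = l * d * N2 + ct1 * M1 * N2 + l * ct2 * N2 * N2" by (simp add: M1 algebra_simps)
    also have "\<dots> < d * M2 + ct1 * M1 * M2 + ct2 * M2 * M2"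
    proof -
      have "l * N2 \<le> N2" using l1 assms by (simp add: mult_left_le_one_le)
      then have "d * (l * N2) \<le> d * N2" using assms by (intro mult_left_mono) auto
      then have "l * d * N2 \<le> d * N2" by (simp add: ac_simps)
      also have "\<dots> < d * M2" using lt assms by simp
      finally have 1: "l * d * N2 < d * M2" .
      have 2: "ct1 * M1 * N2 \<le> ct1 * M1 * M2" using lt assms M1 by (intro mult_left_mono) auto
      have "0 \<le> ct2 * N2 * N2" using assms by simp
      then have "l * (ct2 * N2 * N2) \<le> ct2 * N2 * N2" using l1 assms by (simp add: mult_left_le_one_le)
      then have "l * ct2 * N2 * N2 \<le> ct2 * N2 * N2" by (simp add: ac_simps)
      also have "\<dots> \<le> ct2 * M2 * M2" using lt assms by (intro mult_mono) auto
      finally have 3: "l * ct2 * N2 * N2 \<le> ct2 * M2 * M2" .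
      show ?thesis using 1 2 3 by simp
    qed
    also have "\<dots> = (d + ct1 * M1 + ct2 * M2) * M2" by (simp add: algebra_simps)
    finally show False using B by simp
  qed
  have M1ge: "M1 \<ge> N1"
  proof -
    have "(eta1 + c1) * (M1 - N1) \<ge> 0" using lin M2le assms by simp
    then show ?thesis using c1p by (simp add: zero_le_mult_iff)
  qed
  have M2lt: "M2 < N2"
  proof (rule ccontr)
    assume "\<not> M2 < N2"
    then have "M2 = N2" using M2le by simp
    then have "(eta1 + c1) * (M1 - N1) = 0" using lin by simp
    then have "M1 = N1" using c1p by simp
    then have "l = 1" using M1 \<open>N1 > 0\<close> by simp
    then have "(eta1 * N1 + eta2 * N2) * N1 = 0" using A B \<open>M2 = N2\<close> \<open>M1 = N1\<close> by simp
    moreover have "(eta1 * N1 + eta2 * N2) * N1 > 0" using assms by (simp add: add_pos_nonneg)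
    ultimately show False by linarith
  qed
  have "eta2 + c2 \<le> eta1 + c1 \<longleftrightarrow> (eta2 + c2) * (N2 - M2) \<le> (eta1 + c1) * (N2 - M2)"
    using M2lt by simp
  also have "\<dots> \<longleftrightarrow> (eta1 + c1) * (M1 - N1) \<le> (eta1 + c1) * (N2 - M2)" using lin by simp
  also have "\<dots> \<longleftrightarrow> M1 - N1 \<le> N2 - M2" using c1p by simp
  also have "\<dots> \<longleftrightarrow> M1 + M2 \<le> N1 + N2" by linarith
  finally show ?thesis using M2le M1ge by simp
qed

theorem proposition7:
  fixes k b :: "real \<Rightarrow> real" and d eta1 eta2 c1 c2 ct1 ct2 :: real
    and n1s n1ss :: "real \<Rightarrow> real" and N2s N2ss :: real
  assumes d_pos: "d > 0"
    and k_meas: "set_borel_measurable lborel {0..} k" and k_nonneg: "\<forall>a\<ge>0. k a \<ge> 0"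
    and b_meas: "set_borel_measurable lborel {0..} b" and b_nonneg: "\<forall>a\<ge>0. b a \<ge> 0"
    and k_int: "(\<integral>\<^sup>+ a\<in>{0..}. ennreal (k a) \<partial>lborel) = \<infinity>"
    and b_bdd: "\<exists>M. AE a in lborel. a \<in> {0..} \<longrightarrow> \<bar>b a\<bar> \<le> M"
    and R0_gt: "1 < (\<integral>\<^sup>+ a\<in>{0..}. ennreal (b a * surv k a) \<partial>lborel)"
    and R0_fin: "(\<integral>\<^sup>+ a\<in>{0..}. ennreal (b a * surv k a) \<partial>lborel) < \<infinity>"
    and eta1_pos: "eta1 > 0" and "eta2 \<ge> 0" and "c1 \<ge> 0" and "c2 \<ge> 0"
    and "ct1 \<ge> 0" and "ct2 \<ge> 0"
    and S: "steady_state k b d eta1 eta2 c1 c2 ct1 ct2 True n1s N2s" "nontrivial n1s N2s"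
    and S': "steady_state k b d eta1 eta2 c1 c2 ct1 ct2 False n1ss N2ss" "nontrivial n1ss N2ss"
  shows "popsize n1ss \<ge> popsize n1s \<and> N2ss \<le> N2s \<and>
         (eta2 + c2 \<le> eta1 + c1 \<longleftrightarrow> popsize n1ss + N2ss \<le> popsize n1s + N2s)"
proof -
  note pars = less_imp_le[OF eta1_pos] \<open>eta2 \<ge> 0\<close> \<open>c1 \<ge> 0\<close> \<open>c2 \<ge> 0\<close> \<open>ct1 \<ge> 0\<close> \<open>ct2 \<ge> 0\<close>
  obtain bs Ks where Hs: "bs > 0" "Ks \<ge> 0" "popsize n1s > 0" "N2s \<ge> 0" "\<forall>a\<ge>0. n1s a \<ge> 0"
     "set_borel_measurable lborel {0..} n1s"
     "\<forall>a\<ge>0. n1s a = bs * surv k a * exp (- ((eta1 + c1) * popsize n1s + (eta2 + c2) * N2s) * a)"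
     "(\<integral>\<^sup>+ a\<in>{0..}. ennreal (b a * surv k a * exp (- ((eta1 + c1) * popsize n1s + (eta2 + c2) * N2s) * a)) \<partial>lborel) = 1"
     "(\<integral>\<^sup>+ a\<in>{0..}. ennreal (k a * n1s a) \<partial>lborel) = ennreal Ks"
     "(d + ct1 * popsize n1s + ct2 * N2s) * N2s = Ks + (if True then (eta1 * popsize n1s + eta2 * N2s) * popsize n1s else 0)"
    using ss_props[OF d_pos k_meas k_nonneg b_meas b_nonneg pars S] by blast
  obtain bss Kss where Hss: "bss > 0" "Kss \<ge> 0" "popsize n1ss > 0" "N2ss \<ge> 0" "\<forall>a\<ge>0. n1ss a \<ge> 0"
     "set_borel_measurable lborel {0..} n1ss"
     "\<forall>a\<ge>0. n1ss a = bss * surv k a * exp (- ((eta1 + c1) * popsize n1ss + (eta2 + c2) * N2ss) * a)"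
     "(\<integral>\<^sup>+ a\<in>{0..}. ennreal (b a * surv k a * exp (- ((eta1 + c1) * popsize n1ss + (eta2 + c2) * N2ss) * a)) \<partial>lborel) = 1"
     "(\<integral>\<^sup>+ a\<in>{0..}. ennreal (k a * n1ss a) \<partial>lborel) = ennreal Kss"
     "(d + ct1 * popsize n1ss + ct2 * N2ss) * N2ss = Kss + (if False then (eta1 * popsize n1ss + eta2 * N2ss) * popsize n1ss else 0)"
    using ss_props[OF d_pos k_meas k_nonneg b_meas b_nonneg pars S'] by blast
  define Cs where "Cs = (eta1 + c1) * popsize n1s + (eta2 + c2) * N2s"
  define Css where "Css = (eta1 + c1) * popsize n1ss + (eta2 + c2) * N2ss"
  have Ceq: "Cs = Css"
  proof (rule linorder_cases[of Cs Css])
    assume "Cs < Css"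
    then show ?thesis using F_lt_false[OF b_meas b_nonneg R0_gt, of Cs Css] Hs(8) Hss(8)
      unfolding Cs_def Css_def by blast
  next
    assume "Css < Cs"
    then show ?thesis using F_lt_false[OF b_meas b_nonneg R0_gt, of Css Cs] Hs(8) Hss(8)
      unfolding Cs_def Css_def by blast
  qed
  define l where "l = bss / bs"
  have lpos: "l > 0" unfolding l_def using Hs(1) Hss(1) by simp
  have prp: "n1ss a = l * n1s a" if "a \<ge> 0" for a
  proof -
    have "n1ss a = bss * surv k a * exp (- Cs * a)" using Hss(7) that Ceq unfolding Css_def by simp
    also have "\<dots> = l * (bs * surv k a * exp (- Cs * a))" unfolding l_def using Hs(1) by simp
    also have "\<dots> = l * n1s a" using Hs(7) that unfolding Cs_def by simp
    finally show ?thesis .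
  qed
  have M1: "popsize n1ss = l * popsize n1s"
  proof -
    have "popsize n1ss = (LINT a:{0..}|lborel. l * n1s a)"
      unfolding popsize_def by (rule set_lebesgue_integral_cong) (auto simp: prp)
    then show ?thesis unfolding popsize_def by simp
  qed
  have "ennreal Kss = (\<integral>\<^sup>+ a. ennreal l * (ennreal (k a * n1s a) * indicator {0..} a) \<partial>lborel)"
    unfolding Hss(9)[symmetric]
  proof (intro nn_integral_cong)
    fix a :: real
    show "ennreal (k a * n1ss a) * indicator {0..} a = ennreal l * (ennreal (k a * n1s a) * indicator {0..} a)"
    proof (cases "a \<ge> 0")
      case True
      have "ennreal (k a * n1ss a) = ennreal (l * (k a * n1s a))" using prp[OF True] by (simp add: ac_simps)
      also have "\<dots> = ennreal l * ennreal (k a * n1s a)"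
        by (rule ennreal_mult) (use lpos True k_nonneg Hs(5) in auto)
      finally show ?thesis using True by simp
    qed simp
  qed
  also have "\<dots> = ennreal l * ennreal Ks"
    using nn_integral_cmult[OF ind_meas[OF set_meas_mult[OF k_meas Hs(6)]], of "ennreal l"] Hs(9) by simp
  also have "\<dots> = ennreal (l * Ks)" using lpos Hs(2) by (simp add: ennreal_mult)
  finally have Kl: "Kss = l * Ks" using lpos Hs(2) Hss(2) by (subst (asm) ennreal_inj) auto
  show ?thesis
    using alg[OF d_pos eta1_pos \<open>eta2 \<ge> 0\<close> \<open>c1 \<ge> 0\<close> \<open>c2 \<ge> 0\<close> \<open>ct1 \<ge> 0\<close> \<open>ct2 \<ge> 0\<close>
      Hs(3) lpos Hs(4) Hss(4) Hs(2), of "popsize n1ss"] Hs(10) Hss(10) Kl M1 Ceq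
    unfolding Cs_def Css_def by simp
qed

end
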